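(* Let $A$ be a finite skew brace such that $\Lambda(A)$ has exactly one vertex. Then $A^3=\{0\}$ (so $A$ is left nilpotent of class two), $\operatorname{Fix}(A)$ is an ideal of index $2$ in $A$, and $A^2=\operatorname{Fix}(A)$.
   Context: A skew brace is a triple $(A,+,\circ)$ where $(A,+)$ and $(A,\circ)$ are groups with $a\circ(b+c)=a\circ b-a+a\circ c$. $\lambda_a(b)=-a+a\circ b$, $a*b=\lambda_a(b)-b$; for subsets $X,Y$, $X*Y$ is the additive subgroup generated by all $x*y$; $A^1=A$, $A^{n+1}=A*A^n$. $\operatorname{Fix}(A)=\{a\in A:\lambda_x(a)=a\ \forall x\in A\}$. An ideal is a subset $I$ that is a normal subgroup of both $(A,+)$ and $(A,\circ)$ with $\lambda_a(I)\subseteq I$ for all $a$. $\Lambda(A)$ is the graph whose vertices are the $\lambda$-orbits of size $>1$, two distinct vertices $L_1,L_2$ adjacent iff $\gcd(|L_1|,|L_2|)\ne1$. *)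

theory Defs
  imports "HOL-Algebra.Algebra"
begin

text \<open>A skew brace is given by two group structures P (the additive group (A,+),
written multiplicatively in HOL-Algebra, so mult P = +, one P = 0, inv P = -)
and M (the group (A,\<circ>)) on the same carrier.\<close>

definition skew_brace :: "('a, 'b) monoid_scheme \<Rightarrow> ('a, 'c) monoid_scheme \<Rightarrow> bool" where
  "skew_brace P M \<longleftrightarrow> group P \<and> group M \<and> carrier P = carrier M \<and>
     (\<forall>a\<in>carrier P. \<forall>b\<in>carrier P. \<forall>c\<in>carrier P.
        a \<otimes>\<^bsub>M\<^esub> (b \<otimes>\<^bsub>P\<^esub> c)
          = ((a \<otimes>\<^bsub>M\<^esub> b) \<otimes>\<^bsub>P\<^esub> inv\<^bsub>P\<^esub> a) \<otimes>\<^bsub>P\<^esub> (a \<otimes>\<^bsub>M\<^esub> c))"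

definition brace_lambda :: "('a, 'b) monoid_scheme \<Rightarrow> ('a, 'c) monoid_scheme \<Rightarrow> 'a \<Rightarrow> 'a \<Rightarrow> 'a" where
  "brace_lambda P M a b = inv\<^bsub>P\<^esub> a \<otimes>\<^bsub>P\<^esub> (a \<otimes>\<^bsub>M\<^esub> b)"

definition brace_star :: "('a, 'b) monoid_scheme \<Rightarrow> ('a, 'c) monoid_scheme \<Rightarrow> 'a \<Rightarrow> 'a \<Rightarrow> 'a" where
  "brace_star P M a b = brace_lambda P M a b \<otimes>\<^bsub>P\<^esub> inv\<^bsub>P\<^esub> b"

definition brace_star_set :: "('a, 'b) monoid_scheme \<Rightarrow> ('a, 'c) monoid_scheme \<Rightarrow> 'a set \<Rightarrow> 'a set \<Rightarrow> 'a set" where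
  "brace_star_set P M S T = generate P ((\<lambda>(x, y). brace_star P M x y) ` (S \<times> T))"

text \<open>brace_pow P M n = A^n for n \<ge> 1 (A^1 = A, A^(n+1) = A * A^n); the value at 0 is
  set to A as well and is irrelevant.\<close>
fun brace_pow :: "('a, 'b) monoid_scheme \<Rightarrow> ('a, 'c) monoid_scheme \<Rightarrow> nat \<Rightarrow> 'a set" where
  "brace_pow P M 0 = carrier P"
| "brace_pow P M (Suc 0) = carrier P"
| "brace_pow P M (Suc (Suc n)) = brace_star_set P M (carrier P) (brace_pow P M (Suc n))"

definition brace_Fix :: "('a, 'b) monoid_scheme \<Rightarrow> ('a, 'c) monoid_scheme \<Rightarrow> 'a set" where
  "brace_Fix P M = {a \<in> carrier P. \<forall>x\<in>carrier P. brace_lambda P M x a = a}"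

definition brace_ideal :: "'a set \<Rightarrow> ('a, 'b) monoid_scheme \<Rightarrow> ('a, 'c) monoid_scheme \<Rightarrow> bool" where
  "brace_ideal I P M \<longleftrightarrow> I \<lhd> P \<and> I \<lhd> M \<and>
     (\<forall>a\<in>carrier P. brace_lambda P M a ` I \<subseteq> I)"

definition lambda_orbit :: "('a, 'b) monoid_scheme \<Rightarrow> ('a, 'c) monoid_scheme \<Rightarrow> 'a \<Rightarrow> 'a set" where
  "lambda_orbit P M b = (\<lambda>a. brace_lambda P M a b) ` carrier P"

definition Lambda_vertices :: "('a, 'b) monoid_scheme \<Rightarrow> ('a, 'c) monoid_scheme \<Rightarrow> 'a set set" where
  "Lambda_vertices P M = {lambda_orbit P M b | b. b \<in> carrier P \<and> card (lambda_orbit P M b) > 1}"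

end

theory Submission
  imports Defs
begin

locale sbr = P: group P + M: group M
  for P :: "('a, 'b) monoid_scheme" and M :: "('a, 'c) monoid_scheme" +
  assumes carr: "carrier M = carrier P"
  and law: "\<And>a b c. a\<in>carrier P \<Longrightarrow> b\<in>carrier P \<Longrightarrow> c\<in>carrier P \<Longrightarrow>
        a \<otimes>\<^bsub>M\<^esub> (b \<otimes>\<^bsub>P\<^esub> c)
          = ((a \<otimes>\<^bsub>M\<^esub> b) \<otimes>\<^bsub>P\<^esub> inv\<^bsub>P\<^esub> a) \<otimes>\<^bsub>P\<^esub> (a \<otimes>\<^bsub>M\<^esub> c)"
begin

abbreviation "lam \<equiv> brace_lambda P M"

lemma Mc: "x \<in> carrier P \<Longrightarrow> y \<in> carrier P \<Longrightarrow> x \<otimes>\<^bsub>M\<^esub> y \<in> carrier P"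
  using M.m_closed carr by auto

lemma one_eq: "\<one>\<^bsub>M\<^esub> = \<one>\<^bsub>P\<^esub>"
proof -
  have o: "\<one>\<^bsub>M\<^esub> \<in> carrier P" using carr by auto
  have "\<one>\<^bsub>M\<^esub> \<otimes>\<^bsub>M\<^esub> (\<one>\<^bsub>P\<^esub> \<otimes>\<^bsub>P\<^esub> \<one>\<^bsub>P\<^esub>)
     = ((\<one>\<^bsub>M\<^esub> \<otimes>\<^bsub>M\<^esub> \<one>\<^bsub>P\<^esub>) \<otimes>\<^bsub>P\<^esub> inv\<^bsub>P\<^esub> \<one>\<^bsub>M\<^esub>) \<otimes>\<^bsub>P\<^esub> (\<one>\<^bsub>M\<^esub> \<otimes>\<^bsub>M\<^esub> \<one>\<^bsub>P\<^esub>)"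
    using law[OF o P.one_closed P.one_closed] by simp
  hence "\<one>\<^bsub>P\<^esub> = inv\<^bsub>P\<^esub> \<one>\<^bsub>M\<^esub>" using o carr by simp
  thus ?thesis using o by (metis P.inv_inv P.inv_one)
qed

lemma comp_one: "a \<in> carrier P \<Longrightarrow> a \<otimes>\<^bsub>M\<^esub> \<one>\<^bsub>P\<^esub> = a"
  using one_eq carr M.r_one by metis

lemma Pcancel: "x \<in> carrier P \<Longrightarrow> y \<in> carrier P \<Longrightarrow> x \<otimes>\<^bsub>P\<^esub> (inv\<^bsub>P\<^esub> x \<otimes>\<^bsub>P\<^esub> y) = y"
  by (simp add: P.m_assoc[symmetric])

lemma lam_closed: "a \<in> carrier P \<Longrightarrow> b \<in> carrier P \<Longrightarrow> lam a b \<in> carrier P"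
  by (simp add: brace_lambda_def Mc)

lemma mult_lam: "a \<in> carrier P \<Longrightarrow> b \<in> carrier P \<Longrightarrow> a \<otimes>\<^bsub>P\<^esub> lam a b = a \<otimes>\<^bsub>M\<^esub> b"
  by (simp add: brace_lambda_def Mc P.m_assoc[symmetric])

lemma lam_one_left: "b \<in> carrier P \<Longrightarrow> lam \<one>\<^bsub>P\<^esub> b = b"
  using one_eq carr by (metis M.l_one P.inv_one P.l_one brace_lambda_def)

lemma lam_hom: "a \<in> carrier P \<Longrightarrow> b \<in> carrier P \<Longrightarrow> c \<in> carrier P \<Longrightarrow>
   lam a (b \<otimes>\<^bsub>P\<^esub> c) = lam a b \<otimes>\<^bsub>P\<^esub> lam a c"
  by (simp add: brace_lambda_def law Mc P.m_assoc)

lemma lam_one_right: "a \<in> carrier P \<Longrightarrow> lam a \<one>\<^bsub>P\<^esub> = \<one>\<^bsub>P\<^esub>"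
  by (simp add: brace_lambda_def comp_one)

lemma lam_inv: "a \<in> carrier P \<Longrightarrow> b \<in> carrier P \<Longrightarrow> lam a (inv\<^bsub>P\<^esub> b) = inv\<^bsub>P\<^esub> (lam a b)"
proof -
  assume a: "a \<in> carrier P" and b: "b \<in> carrier P"
  have "lam a (inv\<^bsub>P\<^esub> b) \<otimes>\<^bsub>P\<^esub> lam a b = \<one>\<^bsub>P\<^esub>"
    using lam_hom[OF a, of "inv\<^bsub>P\<^esub> b" b] a b lam_one_right by simp
  thus ?thesis using a b lam_closed by (metis P.inv_closed P.inv_equality)
qed

lemma lam_comp: "a \<in> carrier P \<Longrightarrow> b \<in> carrier P \<Longrightarrow> c \<in> carrier P \<Longrightarrow>
   lam a (lam b c) = lam (a \<otimes>\<^bsub>M\<^esub> b) c"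
proof -
  assume a: "a \<in> carrier P" and b: "b \<in> carrier P" and c: "c \<in> carrier P"
  have "lam a (lam b c) = lam a (inv\<^bsub>P\<^esub> b) \<otimes>\<^bsub>P\<^esub> lam a (b \<otimes>\<^bsub>M\<^esub> c)"
    using a b c by (simp add: brace_lambda_def[of P M b c] lam_hom Mc)
  also have "\<dots> = inv\<^bsub>P\<^esub> (inv\<^bsub>P\<^esub> a \<otimes>\<^bsub>P\<^esub> (a \<otimes>\<^bsub>M\<^esub> b)) \<otimes>\<^bsub>P\<^esub> (inv\<^bsub>P\<^esub> a \<otimes>\<^bsub>P\<^esub> (a \<otimes>\<^bsub>M\<^esub> (b \<otimes>\<^bsub>M\<^esub> c)))"
    using lam_inv[OF a b] by (simp add: brace_lambda_def[of P M a "b \<otimes>\<^bsub>M\<^esub> c"] brace_lambda_def[of P M a b])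
  also have "\<dots> = inv\<^bsub>P\<^esub> (a \<otimes>\<^bsub>M\<^esub> b) \<otimes>\<^bsub>P\<^esub> ((a \<otimes>\<^bsub>M\<^esub> b) \<otimes>\<^bsub>M\<^esub> c)"
    using a b c carr by (simp add: P.inv_mult_group Mc P.m_assoc M.m_assoc Pcancel)
  finally show ?thesis by (simp add: brace_lambda_def)
qed

lemma Minv_closed: "a \<in> carrier P \<Longrightarrow> inv\<^bsub>M\<^esub> a \<in> carrier P"
  using carr M.inv_closed by auto

lemma lam_cancel: "a \<in> carrier P \<Longrightarrow> c \<in> carrier P \<Longrightarrow> lam (inv\<^bsub>M\<^esub> a) (lam a c) = c"
  using lam_comp[OF Minv_closed] carr M.l_inv one_eq lam_one_left by auto

definition phi :: "'a \<Rightarrow> 'a \<Rightarrow> 'a" where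
  "phi a = restrict (lam a) (carrier P)"

lemma phi_Bij: "a \<in> carrier P \<Longrightarrow> phi a \<in> Bij (carrier P)"
proof -
  assume a: "a \<in> carrier P"
  have "bij_betw (lam a) (carrier P) (carrier P)"
  proof (rule bij_betw_byWitness[where f'="lam (inv\<^bsub>M\<^esub> a)"])
    show "\<forall>x\<in>carrier P. lam (inv\<^bsub>M\<^esub> a) (lam a x) = x" using lam_cancel a by auto
    show "\<forall>y\<in>carrier P. lam a (lam (inv\<^bsub>M\<^esub> a) y) = y"
      using lam_cancel[OF Minv_closed[OF a]] a carr by auto
    show "lam a ` carrier P \<subseteq> carrier P" using lam_closed a by auto
    show "lam (inv\<^bsub>M\<^esub> a) ` carrier P \<subseteq> carrier P" using lam_closed Minv_closed a by auto
  qed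
  thus ?thesis unfolding phi_def Bij_def by (simp add: bij_betw_restrict_eq)
qed

lemma action: "group_action M (carrier P) phi"
  unfolding group_action_def group_hom_def group_hom_axioms_def
proof (intro conjI)
  show "group M" by (rule M.is_group)
  show "group (BijGroup (carrier P))" by (rule group_BijGroup)
  show "phi \<in> hom M (BijGroup (carrier P))"
    unfolding hom_def
  proof (intro CollectI conjI ballI)
    show "phi \<in> carrier M \<rightarrow> carrier (BijGroup (carrier P))"
      using phi_Bij carr by (auto simp: BijGroup_def)
    fix x y assume x: "x \<in> carrier M" and y: "y \<in> carrier M"
    show "phi (x \<otimes>\<^bsub>M\<^esub> y) = phi x \<otimes>\<^bsub>BijGroup (carrier P)\<^esub> phi y"
      using x y carr phi_Bij
      by (auto simp: BijGroup_def compose_def phi_def lam_comp lam_closed intro!: ext)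
  qed
qed

lemma orbit_eq: "b \<in> carrier P \<Longrightarrow> orbit M phi b = lambda_orbit P M b"
  unfolding orbit_def lambda_orbit_def phi_def using carr by auto

lemma orbit_dvd: assumes b: "b \<in> carrier P" shows "card (lambda_orbit P M b) dvd card (carrier P)"
proof -
  have "card (orbit M phi b) * card (stabilizer M phi b) = order M"
    using group_action.orbit_stabilizer_theorem[OF action, of b] b by simp
  thus ?thesis using orbit_eq[OF b] carr unfolding order_def by (metis dvd_triv_left)
qed

abbreviation "F \<equiv> brace_Fix P M"

lemma F_sub_carr: "F \<subseteq> carrier P" by (auto simp: brace_Fix_def)

lemma lam_F: "x \<in> carrier P \<Longrightarrow> f \<in> F \<Longrightarrow> lam x f = f"
  by (auto simp: brace_Fix_def)

lemma F_subgroup: "subgroup F P"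
proof (rule P.subgroupI)
  show "F \<subseteq> carrier P" by (rule F_sub_carr)
  show "F \<noteq> {}" using lam_one_right by (auto simp: brace_Fix_def)
  fix a b assume a: "a \<in> F" and b: "b \<in> F"
  show "inv\<^bsub>P\<^esub> a \<in> F" using a lam_inv by (auto simp: brace_Fix_def)
  show "a \<otimes>\<^bsub>P\<^esub> b \<in> F" using a b lam_hom by (auto simp: brace_Fix_def)
qed

lemma F_one: "\<one>\<^bsub>P\<^esub> \<in> F" using F_subgroup subgroup.one_closed by blast

lemma lam_notF: "a \<in> carrier P \<Longrightarrow> b \<in> carrier P \<Longrightarrow> b \<notin> F \<Longrightarrow> lam a b \<notin> F"
  using lam_cancel lam_F Minv_closed by metis

end

locale sbr1 = sbr +
  assumes fin: "finite (carrier P)"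
  and one_vertex: "card (Lambda_vertices P M) = 1"
begin

definition b0 where "b0 = (SOME b. b \<in> carrier P \<and> 1 < card (lambda_orbit P M b) \<and>
    Lambda_vertices P M = {lambda_orbit P M b})"

abbreviation "L \<equiv> lambda_orbit P M b0"

lemma b0_props: "b0 \<in> carrier P \<and> 1 < card L \<and> Lambda_vertices P M = {L}"
proof -
  obtain V where V: "Lambda_vertices P M = {V}" using one_vertex card_1_singletonE by blast
  then obtain b where "b \<in> carrier P" "1 < card (lambda_orbit P M b)" "V = lambda_orbit P M b"
    unfolding Lambda_vertices_def by blast
  hence "\<exists>b. b \<in> carrier P \<and> 1 < card (lambda_orbit P M b) \<and> Lambda_vertices P M = {lambda_orbit P M b}"
    using V by blast
  thus ?thesis unfolding b0_def by (rule someI_ex)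
qed

lemma b0_carr: "b0 \<in> carrier P" using b0_props by blast

lemma orb_fin: "finite (lambda_orbit P M b)"
  unfolding lambda_orbit_def using fin by simp

lemma orb_sub: "b \<in> carrier P \<Longrightarrow> lambda_orbit P M b \<subseteq> carrier P"
  unfolding lambda_orbit_def using lam_closed by auto

lemma L_sub: "L \<subseteq> carrier P" using orb_sub b0_carr by blast

lemma in_orb: "b \<in> carrier P \<Longrightarrow> b \<in> lambda_orbit P M b"
proof -
  assume b: "b \<in> carrier P"
  have "b = lam \<one>\<^bsub>P\<^esub> b" using lam_one_left[OF b] by simp
  thus ?thesis unfolding lambda_orbit_def using P.one_closed by (rule image_eqI)
qed

lemma L_notF: "b \<in> L \<Longrightarrow> b \<notin> F"
proof
  assume bL: "b \<in> L" and bF: "b \<in> F"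
  then obtain x where x: "x \<in> carrier P" and bx: "b = lam x b0"
    unfolding lambda_orbit_def by blast
  have "\<forall>y\<in>carrier P. lam y b0 = b"
  proof
    fix y assume y: "y \<in> carrier P"
    have "b0 = lam (inv\<^bsub>M\<^esub> x) b" using lam_cancel[OF x b0_carr] bx by simp
    also have "\<dots> = b" using lam_F Minv_closed[OF x] bF by simp
    finally show "lam y b0 = b" using lam_F y bF by simp
  qed
  hence "L \<subseteq> {b}" unfolding lambda_orbit_def by auto
  hence "card L \<le> card {b}" using card_mono[of "{b}" L] by simp
  hence "card L \<le> 1" by simp
  thus False using b0_props by simp
qed

lemma notF_L: assumes b: "b \<in> carrier P" and nb: "b \<notin> F" shows "b \<in> L"
proof -
  obtain x where x: "x \<in> carrier P" and ne: "lam x b \<noteq> b"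
    using nb b unfolding brace_Fix_def by blast
  have "{b, lam x b} \<subseteq> lambda_orbit P M b"
    using in_orb[OF b] x unfolding lambda_orbit_def by auto
  hence "card {b, lam x b} \<le> card (lambda_orbit P M b)" using orb_fin card_mono by blast
  hence "1 < card (lambda_orbit P M b)" using ne by simp
  hence "lambda_orbit P M b \<in> Lambda_vertices P M" unfolding Lambda_vertices_def using b by blast
  hence "lambda_orbit P M b = L" using b0_props by simp
  thus ?thesis using in_orb[OF b] by simp
qed

lemma L_iff: "b \<in> carrier P \<Longrightarrow> b \<in> L \<longleftrightarrow> b \<notin> F"
  using L_notF notF_L by blast

lemma carr_split: "carrier P = F \<union> L" "F \<inter> L = {}"
  using L_sub F_sub_carr L_iff by blast+

lemma dvd_half: "(a::nat) dvd n \<Longrightarrow> a < n \<Longrightarrow> 2 * a \<le> n"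
proof -
  assume "a dvd n" "a < n"
  then obtain k where k: "n = a * k" by (auto elim: dvdE)
  have "k \<noteq> 0" using k \<open>a < n\<close> by auto
  moreover have "k \<noteq> 1" using k \<open>a < n\<close> by auto
  ultimately have "2 \<le> k" by linarith
  thus ?thesis using k by (metis mult.commute mult_le_mono2)
qed

lemma card_FL: "card F = card L" "card (carrier P) = card F + card L"
proof -
  have fF: "finite F" using fin F_sub_carr finite_subset by blast
  have fL: "finite L" by (rule orb_fin)
  have sum: "card (carrier P) = card F + card L"
    using carr_split card_Un_disjoint[OF fF fL] by simp
  have "card (rcosets\<^bsub>P\<^esub> F) * card F = card (carrier P)"
    using P.lagrange[OF F_subgroup] by (simp add: order_def)
  hence dF: "card F dvd card (carrier P)" by (metis dvd_triv_right)
  have dL: "card L dvd card (carrier P)" using orbit_dvd[OF b0_carr] .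
  have "0 < card L" using b0_props by simp
  hence lF: "card F < card (carrier P)" using sum by simp
  have "0 < card F" using fF F_one card_gt_0_iff by blast
  hence lL: "card L < card (carrier P)" using sum by simp
  show "card F = card L" using dvd_half[OF dF lF] dvd_half[OF dL lL] sum by linarith
  show "card (carrier P) = card F + card L" by (rule sum)
qed

lemma FL_mult: "f \<in> F \<Longrightarrow> y \<in> L \<Longrightarrow> f \<otimes>\<^bsub>P\<^esub> y \<in> L \<and> y \<otimes>\<^bsub>P\<^esub> f \<in> L"
proof -
  assume f: "f \<in> F" and y: "y \<in> L"
  have fc: "f \<in> carrier P" and yc: "y \<in> carrier P" using f y F_sub_carr L_sub by auto
  have yF: "y \<notin> F" using L_notF y by blast
  have "f \<otimes>\<^bsub>P\<^esub> y \<notin> F"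
  proof
    assume "f \<otimes>\<^bsub>P\<^esub> y \<in> F"
    hence "inv\<^bsub>P\<^esub> f \<otimes>\<^bsub>P\<^esub> (f \<otimes>\<^bsub>P\<^esub> y) \<in> F"
      using f F_subgroup subgroup.m_closed subgroup.m_inv_closed by metis
    thus False using yF fc yc by (simp add: P.m_assoc[symmetric])
  qed
  moreover have "y \<otimes>\<^bsub>P\<^esub> f \<notin> F"
  proof
    assume "y \<otimes>\<^bsub>P\<^esub> f \<in> F"
    hence "(y \<otimes>\<^bsub>P\<^esub> f) \<otimes>\<^bsub>P\<^esub> inv\<^bsub>P\<^esub> f \<in> F"
      using f F_subgroup subgroup.m_closed subgroup.m_inv_closed by metis
    thus False using yF fc yc by (simp add: P.m_assoc)
  qed
  ultimately show ?thesis using L_iff fc yc by auto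
qed

lemma idx: assumes x: "x \<in> L" and y: "y \<in> L" shows "y \<otimes>\<^bsub>P\<^esub> inv\<^bsub>P\<^esub> x \<in> F"
proof -
  have xc: "x \<in> carrier P" using x L_sub by auto
  have inj: "inj_on (\<lambda>h. h \<otimes>\<^bsub>P\<^esub> x) F"
  proof (rule inj_onI)
    fix h h' assume "h \<in> F" "h' \<in> F" "h \<otimes>\<^bsub>P\<^esub> x = h' \<otimes>\<^bsub>P\<^esub> x"
    moreover have "h \<in> carrier P" "h' \<in> carrier P" using calculation F_sub_carr by auto
    ultimately show "h = h'" using xc P.r_cancel[of x h h'] by simp
  qed
  have im: "(\<lambda>h. h \<otimes>\<^bsub>P\<^esub> x) ` F \<subseteq> L" using FL_mult x by auto
  have "card ((\<lambda>h. h \<otimes>\<^bsub>P\<^esub> x) ` F) = card L" using card_image[OF inj] card_FL(1) by simp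
  hence "(\<lambda>h. h \<otimes>\<^bsub>P\<^esub> x) ` F = L" using card_subset_eq[OF orb_fin im] by simp
  then obtain h where h: "h \<in> F" "y = h \<otimes>\<^bsub>P\<^esub> x" using y by blast
  have hc: "h \<in> carrier P" using h F_sub_carr by auto
  have "y \<otimes>\<^bsub>P\<^esub> inv\<^bsub>P\<^esub> x = h" using h(2) hc xc by (simp add: P.m_assoc)
  thus ?thesis using h by simp
qed

lemma inv_L: assumes x: "x \<in> L" shows "inv\<^bsub>P\<^esub> x \<in> L"
proof -
  have xc: "x \<in> carrier P" using x L_sub by auto
  have xF: "x \<notin> F" using L_notF[OF x] .
  have "inv\<^bsub>P\<^esub> x \<notin> F"
  proof (rule notI)
    assume "inv\<^bsub>P\<^esub> x \<in> F"
    hence "inv\<^bsub>P\<^esub> (inv\<^bsub>P\<^esub> x) \<in> F" by (rule subgroup.m_inv_closed[OF F_subgroup])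
    hence "x \<in> F" by (simp only: P.inv_inv[OF xc])
    thus False using xF by contradiction
  qed
  thus ?thesis using L_iff[OF P.inv_closed[OF xc]] by simp
qed

lemma idx2: assumes x: "x \<in> L" and y: "y \<in> L"
  shows "x \<otimes>\<^bsub>P\<^esub> y \<in> F" "inv\<^bsub>P\<^esub> x \<otimes>\<^bsub>P\<^esub> y \<in> F"
proof -
  have xc: "x \<in> carrier P" and yc: "y \<in> carrier P" using x y L_sub by auto
  have "x \<otimes>\<^bsub>P\<^esub> inv\<^bsub>P\<^esub> (inv\<^bsub>P\<^esub> y) \<in> F" by (rule idx[OF inv_L[OF y] x])
  thus "x \<otimes>\<^bsub>P\<^esub> y \<in> F" by (simp only: P.inv_inv[OF yc])
  have "inv\<^bsub>P\<^esub> y \<otimes>\<^bsub>P\<^esub> inv\<^bsub>P\<^esub> (inv\<^bsub>P\<^esub> x) \<in> F" by (rule idx[OF inv_L[OF x] inv_L[OF y]])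
  hence "inv\<^bsub>P\<^esub> y \<otimes>\<^bsub>P\<^esub> x \<in> F" by (simp only: P.inv_inv[OF xc])
  hence "inv\<^bsub>P\<^esub> (inv\<^bsub>P\<^esub> y \<otimes>\<^bsub>P\<^esub> x) \<in> F" by (rule subgroup.m_inv_closed[OF F_subgroup])
  moreover have "inv\<^bsub>P\<^esub> (inv\<^bsub>P\<^esub> y \<otimes>\<^bsub>P\<^esub> x) = inv\<^bsub>P\<^esub> x \<otimes>\<^bsub>P\<^esub> y"
    using xc yc by (simp add: P.inv_mult_group)
  ultimately show "inv\<^bsub>P\<^esub> x \<otimes>\<^bsub>P\<^esub> y \<in> F" by simp
qed

lemma lam_L: assumes a: "a \<in> carrier P" and b: "b \<in> L" shows "lam a b \<in> L"
proof -
  have bc: "b \<in> carrier P" using b L_sub by auto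
  have bF: "b \<notin> F" using L_notF[OF b] .
  have "lam a b \<notin> F" using lam_notF[OF a bc bF] .
  thus ?thesis using L_iff[OF lam_closed[OF a bc]] by simp
qed

lemma star_F: "a \<in> carrier P \<Longrightarrow> f \<in> F \<Longrightarrow> brace_star P M a f = \<one>\<^bsub>P\<^esub>"
proof -
  assume a: "a \<in> carrier P" and f: "f \<in> F"
  have fc: "f \<in> carrier P" using f F_sub_carr by auto
  show ?thesis unfolding brace_star_def using lam_F[OF a f] fc by simp
qed

lemma star_in_F: assumes a: "a \<in> carrier P" and b: "b \<in> carrier P" shows "brace_star P M a b \<in> F"
proof (cases "b \<in> F")
  case True thus ?thesis using star_F[OF a] F_one by simp
next
  case False
  hence bL: "b \<in> L" using L_iff[OF b] by simp
  have "lam a b \<in> L" by (rule lam_L[OF a bL])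
  thus ?thesis unfolding brace_star_def by (rule idx[OF bL])
qed

lemma pow2: "brace_pow P M 2 = F"
proof -
  have eq: "brace_pow P M 2 = generate P ((\<lambda>(x, y). brace_star P M x y) ` (carrier P \<times> carrier P))"
    by (simp add: numeral_2_eq_2 brace_star_set_def)
  have sub: "(\<lambda>(x, y). brace_star P M x y) ` (carrier P \<times> carrier P) \<subseteq> F"
    using star_in_F by auto
  have "generate P ((\<lambda>(x, y). brace_star P M x y) ` (carrier P \<times> carrier P)) \<subseteq> F"
    by (rule P.generate_subgroup_incl[OF sub F_subgroup])
  moreover have "F \<subseteq> generate P ((\<lambda>(x, y). brace_star P M x y) ` (carrier P \<times> carrier P))"
  proof
    fix f assume f: "f \<in> F"
    have fc: "f \<in> carrier P" using f F_sub_carr by auto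
    have b0L: "b0 \<in> L" using in_orb[OF b0_carr] .
    have "f \<otimes>\<^bsub>P\<^esub> b0 \<in> L" using FL_mult[OF f b0L] by simp
    then obtain a where a: "a \<in> carrier P" and ea: "f \<otimes>\<^bsub>P\<^esub> b0 = lam a b0"
      unfolding lambda_orbit_def by blast
    have "brace_star P M a b0 = f"
      unfolding brace_star_def using ea[symmetric] fc b0_carr by (simp add: P.m_assoc)
    hence "f \<in> (\<lambda>(x, y). brace_star P M x y) ` (carrier P \<times> carrier P)"
      using a b0_carr by force
    thus "f \<in> generate P ((\<lambda>(x, y). brace_star P M x y) ` (carrier P \<times> carrier P))"
      by (rule generate.incl)
  qed
  ultimately show ?thesis using eq by simp
qed

lemma pow3: "brace_pow P M 3 = {\<one>\<^bsub>P\<^esub>}"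
proof -
  have "brace_pow P M 3 = brace_star_set P M (carrier P) (brace_pow P M 2)"
    by (simp add: numeral_3_eq_3 numeral_2_eq_2)
  hence eq: "brace_pow P M 3 = generate P ((\<lambda>(x, y). brace_star P M x y) ` (carrier P \<times> F))"
    by (simp add: pow2 brace_star_set_def)
  have sub: "(\<lambda>(x, y). brace_star P M x y) ` (carrier P \<times> F) \<subseteq> {\<one>\<^bsub>P\<^esub>}"
    using star_F by auto
  have "generate P ((\<lambda>(x, y). brace_star P M x y) ` (carrier P \<times> F)) \<subseteq> {\<one>\<^bsub>P\<^esub>}"
    by (rule P.generate_subgroup_incl[OF sub P.triv_subgroup])
  moreover have "\<one>\<^bsub>P\<^esub> \<in> generate P ((\<lambda>(x, y). brace_star P M x y) ` (carrier P \<times> F))"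
    by (rule generate.one)
  ultimately show ?thesis using eq by blast
qed

lemma cosets2: "card (rcosets\<^bsub>P\<^esub> F) = 2"
proof -
  have "card (rcosets\<^bsub>P\<^esub> F) * card F = card (carrier P)"
    using P.lagrange[OF F_subgroup] by (simp add: order_def)
  hence "card (rcosets\<^bsub>P\<^esub> F) * card F = 2 * card F" using card_FL by simp
  moreover have "0 < card F" using fin F_sub_carr finite_subset F_one card_gt_0_iff by blast
  ultimately show ?thesis by simp
qed

lemma normalP: "F \<lhd> P"
  unfolding P.normal_inv_iff
proof (intro conjI ballI)
  show "subgroup F P" by (rule F_subgroup)
  fix x h assume x: "x \<in> carrier P" and h: "h \<in> F"
  have hc: "h \<in> carrier P" using h F_sub_carr by auto
  show "x \<otimes>\<^bsub>P\<^esub> h \<otimes>\<^bsub>P\<^esub> inv\<^bsub>P\<^esub> x \<in> F"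
  proof (cases "x \<in> F")
    case True
    thus ?thesis using h F_subgroup subgroup.m_closed subgroup.m_inv_closed by metis
  next
    case False
    hence xL: "x \<in> L" using L_iff[OF x] by simp
    have "x \<otimes>\<^bsub>P\<^esub> h \<in> L" using FL_mult[OF h xL] by simp
    thus ?thesis using idx[OF xL] by simp
  qed
qed

lemma comp_F: "a \<in> carrier P \<Longrightarrow> f \<in> F \<Longrightarrow> a \<otimes>\<^bsub>M\<^esub> f = a \<otimes>\<^bsub>P\<^esub> f"
proof -
  assume a: "a \<in> carrier P" and f: "f \<in> F"
  have fc: "f \<in> carrier P" using f F_sub_carr by auto
  show ?thesis using mult_lam[OF a fc] lam_F[OF a f] by simp
qed

lemma invM_F: assumes f: "f \<in> F" shows "inv\<^bsub>M\<^esub> f = inv\<^bsub>P\<^esub> f"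
proof -
  have fc: "f \<in> carrier P" using f F_sub_carr by auto
  define g where "g = inv\<^bsub>M\<^esub> f"
  have gc: "g \<in> carrier P" unfolding g_def using Minv_closed[OF fc] .
  have "f \<otimes>\<^bsub>P\<^esub> lam f g = \<one>\<^bsub>P\<^esub>"
    using mult_lam[OF fc gc] unfolding g_def using M.r_inv carr fc one_eq by simp
  hence "inv\<^bsub>P\<^esub> f \<otimes>\<^bsub>P\<^esub> (f \<otimes>\<^bsub>P\<^esub> lam f g) = inv\<^bsub>P\<^esub> f" using fc by simp
  hence l: "lam f g = inv\<^bsub>P\<^esub> f" using fc lam_closed[OF fc gc] by (simp add: P.m_assoc[symmetric])
  have "lam g (lam f g) = lam (g \<otimes>\<^bsub>M\<^esub> f) g" by (rule lam_comp[OF gc fc gc])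
  also have "g \<otimes>\<^bsub>M\<^esub> f = \<one>\<^bsub>P\<^esub>" unfolding g_def using M.l_inv carr fc one_eq by simp
  finally have "lam g (lam f g) = g" using lam_one_left[OF gc] by simp
  moreover have "lam g (inv\<^bsub>P\<^esub> f) = inv\<^bsub>P\<^esub> f"
    using lam_F[OF gc] subgroup.m_inv_closed[OF F_subgroup f] by simp
  ultimately show ?thesis using l g_def by simp
qed

lemma subgroupM: "subgroup F M"
proof (rule M.subgroupI)
  show "F \<subseteq> carrier M" using F_sub_carr carr by simp
  show "F \<noteq> {}" using F_one by blast
  fix a b assume a: "a \<in> F" and b: "b \<in> F"
  show "inv\<^bsub>M\<^esub> a \<in> F" using invM_F[OF a] subgroup.m_inv_closed[OF F_subgroup a] by simp
  have ac: "a \<in> carrier P" using a F_sub_carr by auto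
  show "a \<otimes>\<^bsub>M\<^esub> b \<in> F" using comp_F[OF ac b] subgroup.m_closed[OF F_subgroup a b] by simp
qed

lemma normalM: "F \<lhd> M"
  unfolding M.normal_inv_iff
proof (intro conjI ballI)
  show "subgroup F M" by (rule subgroupM)
  fix x h assume x': "x \<in> carrier M" and h: "h \<in> F"
  have x: "x \<in> carrier P" using x' carr by simp
  have hc: "h \<in> carrier P" using h F_sub_carr by auto
  show "x \<otimes>\<^bsub>M\<^esub> h \<otimes>\<^bsub>M\<^esub> inv\<^bsub>M\<^esub> x \<in> F"
  proof (cases "x \<in> F")
    case True
    thus ?thesis using h subgroupM subgroup.m_closed subgroup.m_inv_closed by metis
  next
    case False
    hence xL: "x \<in> L" using L_iff[OF x] by simp
    define g where "g = x \<otimes>\<^bsub>M\<^esub> h \<otimes>\<^bsub>M\<^esub> inv\<^bsub>M\<^esub> x"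
    have "g \<in> carrier M" unfolding g_def using x' hc carr M.m_closed M.inv_closed by simp
    hence gc: "g \<in> carrier P" using carr by simp
    have ge: "g \<otimes>\<^bsub>M\<^esub> x = x \<otimes>\<^bsub>M\<^esub> h"
    proof -
      have hM: "h \<in> carrier M" using hc carr by simp
      thus ?thesis unfolding g_def using x' by (simp add: M.m_assoc)
    qed
    have xh: "x \<otimes>\<^bsub>M\<^esub> h \<in> L" using comp_F[OF x h] FL_mult[OF h xL] by simp
    show ?thesis unfolding g_def[symmetric]
    proof (rule ccontr)
      assume "g \<notin> F"
      hence gL: "g \<in> L" using L_iff[OF gc] by simp
      have "lam g x \<in> L" by (rule lam_L[OF gc xL])
      hence "g \<otimes>\<^bsub>P\<^esub> lam g x \<in> F" by (rule idx2(1)[OF gL])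
      hence "x \<otimes>\<^bsub>M\<^esub> h \<in> F" using mult_lam[OF gc x] ge by simp
      thus False using L_notF[OF xh] by contradiction
    qed
  qed
qed

lemma ideal: "brace_ideal F P M"
  unfolding brace_ideal_def using normalP normalM lam_F by auto

end

theorem mainTheorem12:
  fixes P :: "('a, 'b) monoid_scheme" and M :: "('a, 'c) monoid_scheme"
  assumes "skew_brace P M"
    and "finite (carrier P)"
    and "card (Lambda_vertices P M) = 1"
  shows "brace_pow P M 3 = {\<one>\<^bsub>P\<^esub>}
    \<and> brace_ideal (brace_Fix P M) P M
    \<and> card (rcosets\<^bsub>P\<^esub> (brace_Fix P M)) = 2
    \<and> brace_pow P M 2 = brace_Fix P M"
proof -
  have "sbr P M" using assms(1) unfolding skew_brace_def sbr_def sbr_axioms_def by auto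
  hence "sbr1 P M" using assms(2,3) unfolding sbr1_def sbr1_axioms_def by auto
  then interpret sbr1 P M .
  show ?thesis using pow3 ideal cosets2 pow2 by blast
qed

end
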